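(* Consider Implicit SGD with learning rate $\eta>0$ applied to the function $f$ below, where in each iteration one datapoint $i$ and one class $k\neq y_i$ are sampled, i.e. the new iterate is $$(u',W')=\arg\min_{u,W}\Big\{2\eta f_{ik}(u,W)+\|u-\tilde u\|_2^2+\|W-\tilde W\|_2^2\Big\},$$ where $(\tilde u,\tilde W)$ is the current iterate. Then this iterate can be computed to within $\epsilon$ accuracy using only two $D$-dimensional vector inner products and at most $$\log_2(\epsilon^{-1})+\log_2\Big(\Big|x_i^\top\Big(\tfrac{\tilde w_k}{1+\eta\mu\beta_k}-\tfrac{\tilde w_{y_i}}{1+\eta\mu\beta_{y_i}}\Big)-\tilde u_i\Big|+2\eta N\|x_i\|_2^2+\log(2K)\Big)$$ bisection-method function evaluations.
   Context: Data: $(y_i,x_i)$, $i=1,\dots,N$, with $x_i\in\mathbb{R}^D$ and labels $y_i\in\{1,\dots,K\}$, $K\ge 2$. Parameters are $u\in\mathbb{R}^N$ and $W=[w_1,\dots,w_K]\in\mathbb{R}^{D\times K}$; $\mu\ge 0$ is a ridge parameter. For $j\in\{1,\dots,K\}$ let $n_j=|\{i:y_i=j\}|$ and $\beta_j=\frac{N}{n_j+(N-n_j)/(K-1)}$. For $i\in\{1,\dots,N\}$ and $k\neq y_i$, $$f_{ik}(u,W)=N\big(u_i+e^{-u_i}+(K-1)e^{x_i^\top(w_k-w_{y_i})-u_i}\big)+\tfrac{\mu}{2}\big(\beta_{y_i}\|w_{y_i}\|_2^2+\beta_k\|w_k\|_2^2\big),$$ and $f(u,W)=\mathbb{E}_{ik}[f_{ik}(u,W)]$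 with $i$ uniform on $\{1,\dots,N\}$ and $k$ uniform on $\{1,\dots,K\}\setminus\{y_i\}$. Norms on $W$ are Frobenius norms. *)

theory Defs
  imports "HOL-Analysis.Analysis"
begin

text \<open>Data index type 'n (N = CARD('n)), class type 'k (K = CARD('k)),
  feature type 'd (D = CARD('d)).  u :: real^'n, W :: real^'d^'k with column
  w_j = W$j; the norm on real^'d^'k is the Frobenius norm.\<close>

definition ncls :: "('n::finite \<Rightarrow> 'k) \<Rightarrow> 'k \<Rightarrow> nat" where
  "ncls y j = card {i. y i = j}"

definition beta :: "('n::finite \<Rightarrow> 'k::finite) \<Rightarrow> 'k \<Rightarrow> real" where
  "beta y j = real CARD('n) /
     (real (ncls y j) + (real CARD('n) - real (ncls y j)) / (real CARD('k) - 1))"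

definition f_ik :: "real \<Rightarrow> ('n::finite \<Rightarrow> real^'d::finite) \<Rightarrow> ('n \<Rightarrow> 'k::finite)
    \<Rightarrow> 'n \<Rightarrow> 'k \<Rightarrow> real^'n \<Rightarrow> real^'d^'k \<Rightarrow> real" where
  "f_ik mu x y i k u W =
     real CARD('n) * (u$i + exp (- u$i)
        + (real CARD('k) - 1) * exp (x i \<bullet> (W$k - W$(y i)) - u$i))
     + mu / 2 * (beta y (y i) * (norm (W$(y i)))^2 + beta y k * (norm (W$k))^2)"

definition f_full :: "real \<Rightarrow> ('n::finite \<Rightarrow> real^'d::finite) \<Rightarrow> ('n \<Rightarrow> 'k::finite)
    \<Rightarrow> real^'n \<Rightarrow> real^'d^'k \<Rightarrow> real" where
  "f_full mu x y u W =
     (\<Sum>i\<in>UNIV. (\<Sum>k\<in>{k. k \<noteq> y i}. f_ik mu x y i k u W) / (real CARD('k) - 1))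
       / real CARD('n)"

definition isgd_obj :: "real \<Rightarrow> real \<Rightarrow> ('n::finite \<Rightarrow> real^'d::finite) \<Rightarrow> ('n \<Rightarrow> 'k::finite)
    \<Rightarrow> 'n \<Rightarrow> 'k \<Rightarrow> real^'n \<Rightarrow> real^'d^'k \<Rightarrow> real^'n \<Rightarrow> real^'d^'k \<Rightarrow> real" where
  "isgd_obj eta mu x y i k ut Wt u W =
     2 * eta * f_ik mu x y i k u W + (norm (u - ut))^2 + (norm (W - Wt))^2"

definition is_isgd_iterate :: "real \<Rightarrow> real \<Rightarrow> ('n::finite \<Rightarrow> real^'d::finite) \<Rightarrow> ('n \<Rightarrow> 'k::finite)
    \<Rightarrow> 'n \<Rightarrow> 'k \<Rightarrow> real^'n \<Rightarrow> real^'d^'k \<Rightarrow> real^'n \<Rightarrow> real^'d^'k \<Rightarrow> bool" where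
  "is_isgd_iterate eta mu x y i k ut Wt u' W' \<longleftrightarrow>
     (\<forall>u W. isgd_obj eta mu x y i k ut Wt u' W' \<le> isgd_obj eta mu x y i k ut Wt u W)"

text \<open>Inputs are scalars only: eta, N, K,
  ak = 1/(1+eta mu beta_k), ay = 1/(1+eta mu beta_{y_i}),
  c = x_i^T(ak wt_k - ay wt_{y_i}) (first inner product), q = x_i^T x_i (second
  inner product), ut = ut_i.\<close>

definition isgd_L :: "real \<Rightarrow> real \<Rightarrow> real \<Rightarrow> real \<Rightarrow> real \<Rightarrow> real \<Rightarrow> real" where
  "isgd_L eta N K c q ut = \<bar>c - ut\<bar> + 2 * eta * N * q + ln (2 * K)"

text \<open>For q > 0 the bisection variable is b = c - x_i^T(w_k - w_{y_i}) = s Q with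
  s = eta N (K-1) exp(x_i^T(w_k-w_{y_i}) - u_i) and Q = q (ak + ay);
  u_i is recovered explicitly from b.\<close>
definition isgd_ub :: "real \<Rightarrow> real \<Rightarrow> real \<Rightarrow> real \<Rightarrow> real \<Rightarrow> real \<Rightarrow> real" where
  "isgd_ub eta N K c Q b = c - b - ln (b / (Q * eta * N * (K - 1)))"

text \<open>Returns (g, lo, hi): g is the (decreasing) scalar function whose root in
  [lo, hi] determines the iterate.\<close>
definition isgd_bracket :: "real \<Rightarrow> real \<Rightarrow> real \<Rightarrow> real \<Rightarrow> real \<Rightarrow> real \<Rightarrow> real \<Rightarrow> real
    \<Rightarrow> (real \<Rightarrow> real) \<times> real \<times> real" where
  "isgd_bracket eta N K ak ay c q ut =
     (let Q = q * (ak + ay); A = 1 + (K - 1) * exp c in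
      if q > 0 then
        ((\<lambda>b. Q * (isgd_ub eta N K c Q b - ut + eta * N * (1 - exp (- isgd_ub eta N K c Q b))) - b),
         0, isgd_L eta N K c q ut)
      else
        ((\<lambda>v. ut - v - eta * N * (1 - A * exp (- v))), min ut (ln A), max ut (ln A)))"

text \<open>From the scalar root r: (new u_i, s), where the updated columns are
  w_k' = ak (wt_k - s x_i), w_{y_i}' = ay (wt_{y_i} + s x_i).\<close>
definition isgd_scal :: "real \<Rightarrow> real \<Rightarrow> real \<Rightarrow> real \<Rightarrow> real \<Rightarrow> real \<Rightarrow> real \<Rightarrow> real
    \<Rightarrow> real \<times> real" where
  "isgd_scal eta N K ak ay c q r =
     (if q > 0 then (isgd_ub eta N K c (q * (ak + ay)) r, r / (q * (ak + ay)))
      else (r, eta * N * (K - 1) * exp (c - r)))"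

definition isgd_recon :: "'n::finite \<Rightarrow> 'k::finite \<Rightarrow> 'k \<Rightarrow> real^'d::finite \<Rightarrow> real^'n
    \<Rightarrow> real^'d^'k \<Rightarrow> real \<Rightarrow> real \<Rightarrow> real \<times> real \<Rightarrow> (real^'n) \<times> (real^'d^'k)" where
  "isgd_recon i k ky xi ut Wt ak ay us =
     (case us of (uval, s) \<Rightarrow>
       ((\<chi> j. if j = i then uval else ut$j),
        (\<chi> j. if j = k then ak *\<^sub>R (Wt$k - s *\<^sub>R xi)
              else if j = ky then ay *\<^sub>R (Wt$ky + s *\<^sub>R xi) else Wt$j)))"

text \<open>Bisection for a decreasing function g: n steps = n evaluations of g.\<close>
fun bisect :: "(real \<Rightarrow> real) \<Rightarrow> real \<Rightarrow> real \<Rightarrow> nat \<Rightarrow> real \<times> real" where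
  "bisect g lo hi 0 = (lo, hi)"
| "bisect g lo hi (Suc n) =
     (case bisect g lo hi n of (a, b) \<Rightarrow>
        let m = (a + b) / 2 in if g m \<ge> 0 then (m, b) else (a, m))"

end

theory Submission
  imports Defs
begin


lemma beta_pos:
  fixes y :: "'n::finite \<Rightarrow> 'k::finite"
  assumes "CARD('k) \<ge> 2"
  shows "beta y j > 0"
proof -
  have nle: "ncls y j \<le> CARD('n)" unfolding ncls_def by (rule card_mono) auto
  have K1: "real CARD('k) - 1 \<ge> 1" using assms by simp
  have N: "real CARD('n) > 0" by simp
  have "real (ncls y j) \<ge> real (ncls y j) / (real CARD('k) - 1)"
  proof -
    have "real (ncls y j) * 1 \<le> real (ncls y j) * (real CARD('k) - 1)"
      by (rule mult_left_mono) (use K1 in auto)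
    thus ?thesis using K1 by (simp add: divide_le_eq)
  qed
  hence "real (ncls y j) + (real CARD('n) - real (ncls y j)) / (real CARD('k) - 1)
     \<ge> real CARD('n) / (real CARD('k) - 1)"
    by (simp add: diff_divide_distrib)
  moreover have "real CARD('n) / (real CARD('k) - 1) > 0" using K1 N by simp
  ultimately show ?thesis unfolding beta_def using N by (simp add: order_less_le_trans)
qed

lemma bisect_inv:
  assumes lr: "lo \<le> r" "r \<le> hi"
    and mono: "\<And>m. (lo + r)/2 \<le> m \<Longrightarrow> m \<le> hi \<Longrightarrow> (0 \<le> g m \<longrightarrow> m \<le> r) \<and> (g m < 0 \<longrightarrow> r \<le> m)"
  shows "bisect g lo hi n = (a, b) \<Longrightarrow> lo \<le> a \<and> a \<le> r \<and> r \<le> b \<and> b \<le> hi \<and> b - a = (hi - lo) / 2^n"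
proof (induction n arbitrary: a b)
  case 0
  then show ?case using lr by simp
next
  case (Suc n)
  obtain a0 b0 where ab: "bisect g lo hi n = (a0, b0)" by (cases "bisect g lo hi n")
  note IH = Suc.IH[OF ab]
  define m where "m = (a0 + b0)/2"
  have m1: "(lo + r)/2 \<le> m" "m \<le> hi" using IH unfolding m_def by auto
  note mm = mono[OF m1]
  show ?case
  proof (cases "0 \<le> g m")
    case True
    with Suc.prems ab have "a = m" "b = b0" by (auto simp: m_def Let_def)
    have "b - a = (b0 - a0)/2" using \<open>a = m\<close> \<open>b = b0\<close> by (simp add: m_def field_simps)
    then show ?thesis using IH mm True m1 \<open>a = m\<close> \<open>b = b0\<close> by (auto simp: m_def)
  next
    case False
    with Suc.prems ab have "a = a0" "b = m" by (auto simp: m_def Let_def)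
    have "b - a = (b0 - a0)/2" using \<open>a = a0\<close> \<open>b = m\<close> by (simp add: m_def field_simps)
    then show ?thesis using IH mm False m1 \<open>a = a0\<close> \<open>b = m\<close> by (auto simp: m_def)
  qed
qed

lemma bisect_width:
  assumes "lo \<le> r" "r \<le> hi"
    and mono: "\<And>m. (lo + r)/2 \<le> m \<Longrightarrow> m \<le> hi \<Longrightarrow> (0 \<le> g m \<longrightarrow> m \<le> r) \<and> (g m < 0 \<longrightarrow> r \<le> m)"
    and L: "hi - lo \<le> L" "L > 0" and eps: "eps > 0"
    and n: "real n \<ge> log 2 (1 / eps) + log 2 L"
  shows "case bisect g lo hi n of (a, b) \<Rightarrow> a \<le> r \<and> r \<le> b \<and> b - a \<le> eps"
proof -
  obtain a b where ab: "bisect g lo hi n = (a, b)" by (cases "bisect g lo hi n")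
  note I = bisect_inv[OF assms(1,2) mono ab]
  have "(2::real) powr (log 2 (1/eps) + log 2 L) \<le> 2 powr real n"
    using n by simp
  also have "(2::real) powr (log 2 (1/eps) + log 2 L) = L / eps"
    using L eps by (simp add: powr_add)
  finally have "L / eps \<le> 2 ^ n" by (simp add: powr_realpow)
  hence "L \<le> eps * 2 ^ n" using eps by (simp add: divide_le_eq mult.commute)
  hence "(hi - lo) / 2^n \<le> eps" using L by (simp add: divide_le_eq mult.commute)
  then show ?thesis using I ab by simp
qed



lemma inner_single_vec:
  fixes a b :: "real^'n::finite"
  assumes "\<And>j. j \<noteq> i \<Longrightarrow> b$j = 0"
  shows "a \<bullet> b = a$i * b$i"
proof -
  have "a \<bullet> b = (\<Sum>j\<in>UNIV. a$j * b$j)" by (simp add: inner_vec_def)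
  also have "\<dots> = (\<Sum>j\<in>UNIV. if j = i then a$i * b$i else 0)"
    by (rule sum.cong) (auto simp: assms)
  finally show ?thesis by simp
qed

lemma inner_two_vec:
  fixes A B :: "real^'d::finite^'k::finite"
  assumes "k \<noteq> l" "\<And>j. j \<noteq> k \<Longrightarrow> j \<noteq> l \<Longrightarrow> B$j = 0"
  shows "A \<bullet> B = A$k \<bullet> B$k + A$l \<bullet> B$l"
proof -
  have "A \<bullet> B = (\<Sum>j\<in>UNIV. A$j \<bullet> B$j)" by (simp add: inner_vec_def)
  also have "\<dots> = (\<Sum>j\<in>UNIV. (if j = k then A$k \<bullet> B$k else 0) + (if j = l then A$l \<bullet> B$l else 0))"
    by (rule sum.cong) (use assms in auto)
  also have "\<dots> = A$k \<bullet> B$k + A$l \<bullet> B$l" by (simp add: sum.distrib)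
  finally show ?thesis .
qed

lemma norm_split_sq:
  fixes a b c :: "'a::real_inner"
  shows "(norm (a - c))^2 = (norm (a - b))^2 + (norm (b - c))^2 + 2 * ((a - b) \<bullet> (b - c))"
proof -
  have "(a - c) \<bullet> (a - c) = ((a - b) + (b - c)) \<bullet> ((a - b) + (b - c))" by simp
  also have "\<dots> = (a - b) \<bullet> (a - b) + (b - c) \<bullet> (b - c) + 2 * ((a - b) \<bullet> (b - c))"
    by (simp only: inner_add_left inner_add_right inner_commute[of "b - c" "a - b"])
  finally show ?thesis unfolding power2_norm_eq_inner .
qed

lemma exp_tangent: "exp (t::real) \<ge> exp t0 * (1 + (t - t0))"
proof -
  have "exp (t - t0) \<ge> 1 + (t - t0)" by (rule exp_ge_add_one_self)
  hence "exp t0 * exp (t - t0) \<ge> exp t0 * (1 + (t - t0))" by (simp add: mult_left_mono)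
  thus ?thesis by (simp add: exp_diff)
qed

lemma core:
  fixes x :: "'n::finite \<Rightarrow> real^'d::finite" and y :: "'n \<Rightarrow> 'k::finite"
    and ut us u :: "real^'n" and Wt Ws W :: "real^'d^'k"
  assumes K2: "CARD('k) \<ge> 2" and eta: "eta > 0" and mu: "mu \<ge> 0" and kne: "k \<noteq> y i"
    and ak: "ak = 1 / (1 + eta * mu * beta y k)" and ay: "ay = 1 / (1 + eta * mu * beta y (y i))"
    and rec: "(us, Ws) = isgd_recon i k (y i) (x i) ut Wt ak ay (v, s)"
    and st1: "s = eta * real CARD('n) * (real CARD('k) - 1) * exp (x i \<bullet> (Ws$k - Ws$(y i)) - v)"
    and st2: "eta * real CARD('n) * (1 - exp (- v)) - s + v - ut$i = 0"
  shows "isgd_obj eta mu x y i k ut Wt us Ws + (norm (u - us))^2 + (norm (W - Ws))^2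
          \<le> isgd_obj eta mu x y i k ut Wt u W"
proof -
  define N where "N = real CARD('n)"
  define K1 where "K1 = real CARD('k) - 1"
  define bk where "bk = beta y k"
  define by' where "by' = beta y (y i)"
  define yi where "yi = y i"
  define xi where "xi = x i"
  have bk: "bk > 0" and by': "by' > 0" using beta_pos[OF K2] by (auto simp: bk_def by'_def)
  have Npos: "N > 0" by (simp add: N_def)
  have K1pos: "K1 > 0" using K2 by (simp add: K1_def)
  have usi: "us$i = v" and usj: "\<And>j. j \<noteq> i \<Longrightarrow> us$j = ut$j"
    using rec by (auto simp: isgd_recon_def)
  have Wsk: "Ws$k = ak *\<^sub>R (Wt$k - s *\<^sub>R xi)" and Wsy: "Ws$yi = ay *\<^sub>R (Wt$yi + s *\<^sub>R xi)"
    and Wsj: "\<And>j. j \<noteq> k \<Longrightarrow> j \<noteq> yi \<Longrightarrow> Ws$j = Wt$j"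
    using rec kne by (auto simp: isgd_recon_def xi_def yi_def)
  have pk: "1 + eta * mu * bk > 0" using eta mu bk by (simp add: add_pos_nonneg)
  have py: "1 + eta * mu * by' > 0" using eta mu by' by (simp add: add_pos_nonneg)
  have vk: "(1 + eta * mu * bk) *\<^sub>R Ws$k = Wt$k - s *\<^sub>R xi"
    using pk by (simp add: Wsk ak bk_def)
  have vy: "(1 + eta * mu * by') *\<^sub>R Ws$yi = Wt$yi + s *\<^sub>R xi"
    unfolding Wsy using py by (simp add: ay by'_def)
  define du where "du = u$i - v"
  define dk where "dk = W$k - Ws$k"
  define dy where "dy = W$yi - Ws$yi"
  have cu: "(norm (u - ut))^2 = (norm (u - us))^2 + (norm (us - ut))^2 + 2 * (du * (v - ut$i))"
  proof -
    have "(u - us) \<bullet> (us - ut) = (u - us)$i * (us - ut)$i"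
      by (rule inner_single_vec) (simp add: usj)
    thus ?thesis using norm_split_sq[of u ut us] by (simp add: usi du_def)
  qed
  have cW: "(norm (W - Wt))^2 = (norm (W - Ws))^2 + (norm (Ws - Wt))^2
              + 2 * (dk \<bullet> (Ws$k - Wt$k) + dy \<bullet> (Ws$yi - Wt$yi))"
  proof -
    have "(W - Ws) \<bullet> (Ws - Wt) = (W - Ws)$k \<bullet> (Ws - Wt)$k + (W - Ws)$yi \<bullet> (Ws - Wt)$yi"
      by (rule inner_two_vec) (use kne Wsj in \<open>auto simp: yi_def\<close>)
    thus ?thesis using norm_split_sq[of W Wt Ws] by (simp add: dk_def dy_def)
  qed
  have ik: "dk \<bullet> (Ws$k - Wt$k) = - s * (xi \<bullet> dk) - eta * mu * bk * (Ws$k \<bullet> dk)"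
  proof -
    have "Ws$k - Wt$k = - s *\<^sub>R xi - (eta * mu * bk) *\<^sub>R Ws$k"
      using vk by (simp add: algebra_simps)
    thus ?thesis by (simp add: inner_diff_right inner_commute)
  qed
  have iy: "dy \<bullet> (Ws$yi - Wt$yi) = s * (xi \<bullet> dy) - eta * mu * by' * (Ws$yi \<bullet> dy)"
  proof -
    have "Ws$yi - Wt$yi = s *\<^sub>R xi - (eta * mu * by') *\<^sub>R Ws$yi"
      using vy by (simp add: algebra_simps)
    thus ?thesis by (simp add: inner_diff_right inner_commute)
  qed
  define zs where "zs = xi \<bullet> (Ws$k - Ws$yi) - v"
  define z where "z = xi \<bullet> (W$k - W$yi) - u$i"
  have zz: "z - zs = xi \<bullet> dk - xi \<bullet> dy - du"
    by (simp add: z_def zs_def dk_def dy_def du_def inner_diff_right)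
  have s_eq: "s = eta * N * K1 * exp zs" using st1 by (simp add: N_def K1_def zs_def xi_def yi_def)
  have uti: "ut$i = eta * N * (1 - exp (- v)) - s + v" using st2 by (simp add: N_def)
  have T1: "exp (- (u$i)) \<ge> exp (- v) * (1 - du)"
  proof -
    have h: "exp (- (u$i)) \<ge> exp (- v) * (1 + (- (u$i) - - v))" by (rule exp_tangent)
    have "1 + (- (u$i) - - v) = 1 - du" by (simp add: du_def)
    with h show ?thesis by simp
  qed
  have T2: "exp z \<ge> exp zs * (1 + (xi \<bullet> dk - xi \<bullet> dy - du))"
    using exp_tangent[of zs z] by (simp only: zz)
  have T3: "(norm (W$k))^2 \<ge> (norm (Ws$k))^2 + 2 * (Ws$k \<bullet> dk)"
    using norm_split_sq[of "W$k" 0 "Ws$k"] by (simp add: dk_def inner_commute)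
  have T4: "(norm (W$yi))^2 \<ge> (norm (Ws$yi))^2 + 2 * (Ws$yi \<bullet> dy)"
    using norm_split_sq[of "W$yi" 0 "Ws$yi"] by (simp add: dy_def inner_commute)
  have e1: "2*eta*N * exp (- (u$i)) \<ge> 2*eta*N * (exp (- v) * (1 - du))"
    using T1 eta Npos by (intro mult_left_mono) auto
  have e2: "2*eta*N*K1 * exp z \<ge> 2*eta*N*K1 * (exp zs * (1 + (xi \<bullet> dk - xi \<bullet> dy - du)))"
    using T2 eta Npos K1pos by (intro mult_left_mono) auto
  have e3: "eta*mu*bk * (norm (W$k))^2 \<ge> eta*mu*bk * ((norm (Ws$k))^2 + 2 * (Ws$k \<bullet> dk))"
    using T3 eta mu bk by (intro mult_left_mono) auto
  have e4: "eta*mu*by' * (norm (W$yi))^2 \<ge> eta*mu*by' * ((norm (Ws$yi))^2 + 2 * (Ws$yi \<bullet> dy))"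
    using T4 eta mu by' by (intro mult_left_mono) auto
  have ui: "u$i = v + du" by (simp add: du_def)
  have objW: "isgd_obj eta mu x y i k ut Wt u W =
      2*eta*N*(u$i) + 2*eta*N * exp (- (u$i)) + 2*eta*N*K1 * exp z
      + eta*mu*by' * (norm (W$yi))^2 + eta*mu*bk * (norm (W$k))^2
      + (norm (u - ut))^2 + (norm (W - Wt))^2"
    by (simp add: isgd_obj_def f_ik_def N_def K1_def z_def bk_def by'_def yi_def xi_def algebra_simps)
  have objS: "isgd_obj eta mu x y i k ut Wt us Ws =
      2*eta*N*(v::real) + 2*eta*N * exp (- v) + 2*eta*N*K1 * exp zs
      + eta*mu*by' * (norm (Ws$yi))^2 + eta*mu*bk * (norm (Ws$k))^2
      + (norm (us - ut))^2 + (norm (Ws - Wt))^2"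
    by (simp add: isgd_obj_def f_ik_def N_def K1_def zs_def bk_def by'_def yi_def xi_def usi algebra_simps)
  have lin: "2*eta*N*du + 2*eta*N * (exp (- v) * (1 - du)) + 2*eta*N*K1 * (exp zs * (1 + (xi \<bullet> dk - xi \<bullet> dy - du)))
      + eta*mu*by' * ((norm (Ws$yi))^2 + 2 * (Ws$yi \<bullet> dy)) + eta*mu*bk * ((norm (Ws$k))^2 + 2 * (Ws$k \<bullet> dk))
      + 2 * (du * (v - ut$i)) + 2 * (dk \<bullet> (Ws$k - Wt$k) + dy \<bullet> (Ws$yi - Wt$yi))
      = 2*eta*N * exp (- v) + 2*eta*N*K1 * exp zs
      + eta*mu*by' * (norm (Ws$yi))^2 + eta*mu*bk * (norm (Ws$k))^2"
    unfolding ik iy uti s_eq by (simp add: algebra_simps)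
  have ui2: "2*eta*N*(u$i) = 2*eta*N * v + 2*eta*N*du" by (simp add: ui algebra_simps)
  show ?thesis
    unfolding objW objS cu cW using e1 e2 e3 e4 lin ui2 by linarith
qed



lemma finish:
  fixes x :: "'n::finite \<Rightarrow> real^'d::finite" and y :: "'n \<Rightarrow> 'k::finite"
    and ut us :: "real^'n" and Wt Ws :: "real^'d^'k"
  assumes K2: "CARD('k) \<ge> 2" and eta: "eta > 0" and mu: "mu \<ge> 0" and kne: "k \<noteq> y i"
    and ak: "ak = 1 / (1 + eta * mu * beta y k)" and ay: "ay = 1 / (1 + eta * mu * beta y (y i))"
    and rec: "(us, Ws) = isgd_recon i k (y i) (x i) ut Wt ak ay (v, s)"
    and st1: "s = eta * real CARD('n) * (real CARD('k) - 1) * exp (x i \<bullet> (Ws$k - Ws$(y i)) - v)"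
    and st2: "eta * real CARD('n) * (1 - exp (- v)) - s + v - ut$i = 0"
  shows "(\<exists>u' W'. is_isgd_iterate eta mu x y i k ut Wt u' W') \<and>
     (\<forall>u' W'. is_isgd_iterate eta mu x y i k ut Wt u' W' \<longleftrightarrow> (u', W') = (us, Ws))"
proof -
  note C = core[where x=x and y=y and i=i and k=k and ut=ut and Wt=Wt and us=us and Ws=Ws, OF K2 eta mu kne ak ay rec st1 st2]
  have min: "is_isgd_iterate eta mu x y i k ut Wt us Ws"
    unfolding is_isgd_iterate_def
  proof (intro allI)
    fix u W
    show "isgd_obj eta mu x y i k ut Wt us Ws \<le> isgd_obj eta mu x y i k ut Wt u W"
      using C[of u W] by (smt (verit) zero_le_power2)
  qed
  have uniq: "(u', W') = (us, Ws)" if "is_isgd_iterate eta mu x y i k ut Wt u' W'" for u' W'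
  proof -
    have le: "isgd_obj eta mu x y i k ut Wt u' W' \<le> isgd_obj eta mu x y i k ut Wt us Ws"
      using that unfolding is_isgd_iterate_def by blast
    have "(norm (u' - us))^2 + (norm (W' - Ws))^2 \<le> 0" using C[of u' W'] le by linarith
    hence "(norm (u' - us))^2 = 0" "(norm (W' - Ws))^2 = 0"
      by (smt (verit) zero_le_power2)+
    thus ?thesis by simp
  qed
  show ?thesis using min uniq by blast
qed

lemma decr_root:
  fixes g :: "real \<Rightarrow> real"
  assumes dec: "\<And>a b. a \<in> D \<Longrightarrow> b \<in> D \<Longrightarrow> a < b \<Longrightarrow> g b < g a"
    and r: "r \<in> D" "g r = 0" and m: "m \<in> D"
  shows "(0 \<le> g m \<longrightarrow> m \<le> r) \<and> (g m < 0 \<longrightarrow> r \<le> m)"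
proof (intro conjI impI)
  assume "0 \<le> g m" thus "m \<le> r" using dec[OF r(1) m] r(2) by force
next
  assume "g m < 0" thus "r \<le> m" using dec[OF m r(1)] r(2) by force
qed



theorem proposition4:
  fixes eta mu eps :: real
    and x :: "'n::finite \<Rightarrow> real^'d::finite" and y :: "'n \<Rightarrow> 'k::finite"
    and i :: 'n and k :: 'k and ut :: "real^'n" and Wt :: "real^'d^'k"
  assumes "CARD('k) \<ge> 2" and "eta > 0" and "mu \<ge> 0" and "eps > 0" and "k \<noteq> y i"
  defines "ak \<equiv> 1 / (1 + eta * mu * beta y k)"
      and "ay \<equiv> 1 / (1 + eta * mu * beta y (y i))"
      and "c \<equiv> x i \<bullet> ((1 / (1 + eta * mu * beta y k)) *\<^sub>R Wt$k
                 - (1 / (1 + eta * mu * beta y (y i))) *\<^sub>R Wt$(y i))"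
      and "q \<equiv> x i \<bullet> x i"
      and "N \<equiv> real CARD('n)" and "K \<equiv> real CARD('k)"
  shows "(\<exists>u' W'. is_isgd_iterate eta mu x y i k ut Wt u' W') \<and>
    (case isgd_bracket eta N K ak ay c q (ut$i) of (g, lo, hi) \<Rightarrow>
       hi - lo \<le> isgd_L eta N K c q (ut$i) \<and>
       (\<exists>r. lo \<le> r \<and> r \<le> hi \<and>
          (\<forall>u' W'. is_isgd_iterate eta mu x y i k ut Wt u' W' \<longleftrightarrow>
             (u', W') = isgd_recon i k (y i) (x i) ut Wt ak ay (isgd_scal eta N K ak ay c q r)) \<and>
          (\<forall>n::nat. real n \<ge> log 2 (1 / eps) + log 2 (isgd_L eta N K c q (ut$i)) \<longrightarrow>
             (case bisect g lo hi n of (a, b) \<Rightarrow> a \<le> r \<and> r \<le> b \<and> b - a \<le> eps))))"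
proof -
  note K2 = assms(1) and eta = assms(2) and mu = assms(3) and epsp = assms(4) and kne = assms(5)
  have bk: "beta y k > 0" and by': "beta y (y i) > 0" using beta_pos[OF K2] by auto
  have pk: "1 + eta * mu * beta y k > 0" using eta mu bk by (simp add: add_pos_nonneg)
  have py: "1 + eta * mu * beta y (y i) > 0" using eta mu by' by (simp add: add_pos_nonneg)
  have akp: "ak > 0" "ak \<le> 1" using pk eta mu bk unfolding ak_def by (auto simp: divide_le_eq)
  have ayp: "ay > 0" "ay \<le> 1" using py eta mu by' unfolding ay_def by (auto simp: divide_le_eq)
  have Np: "N > 0" unfolding N_def by simp
  have K2r: "K \<ge> 2" unfolding K_def using K2 by simp
  have q0: "q \<ge> 0" unfolding q_def by simp
  define L where "L = isgd_L eta N K c q (ut$i)"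
  have lnK: "ln (2 * K) > 0" using K2r by simp
  have Lp: "L > 0" unfolding L_def isgd_L_def using lnK eta Np q0 by (simp add: add_nonneg_pos)
  have cexp: "c = ak * (x i \<bullet> Wt$k) - ay * (x i \<bullet> Wt$(y i))"
    by (simp add: c_def ak_def ay_def inner_diff_right)
  have xk: "x i \<bullet> ((snd (isgd_recon i k (y i) (x i) ut Wt ak ay (v, s)))$k
              - (snd (isgd_recon i k (y i) (x i) ut Wt ak ay (v, s)))$(y i)) = c - s * (q * (ak + ay))" for v s
    using kne by (simp add: isgd_recon_def cexp q_def inner_diff_right inner_add_right algebra_simps)
  have assemble: "?thesis"
    if br: "isgd_bracket eta N K ak ay c q (ut$i) = (g, lo, hi)" and w: "hi - lo \<le> L"
      and r: "lo \<le> r" "r \<le> hi"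
      and mono: "\<And>m. (lo + r)/2 \<le> m \<Longrightarrow> m \<le> hi \<Longrightarrow> (0 \<le> g m \<longrightarrow> m \<le> r) \<and> (g m < 0 \<longrightarrow> r \<le> m)"
      and sc: "isgd_scal eta N K ak ay c q r = (v, s)"
      and s1: "s = eta * N * (K - 1) * exp (c - s * (q * (ak + ay)) - v)"
      and s2: "eta * N * (1 - exp (- v)) - s + v - ut$i = 0"
    for g lo hi r v s
  proof -
    obtain us Ws where rec: "(us, Ws) = isgd_recon i k (y i) (x i) ut Wt ak ay (v, s)"
      by (metis surj_pair)
    have st1: "s = eta * real CARD('n) * (real CARD('k) - 1) * exp (x i \<bullet> (Ws$k - Ws$(y i)) - v)"
      using s1 xk[of v s] rec[symmetric] by (simp add: N_def K_def)
    have st2: "eta * real CARD('n) * (1 - exp (- v)) - s + v - ut$i = 0" using s2 by (simp add: N_def)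
    note F = finish[where x=x and y=y and i=i and k=k and ut=ut and Wt=Wt and us=us and Ws=Ws,
        OF K2 eta mu kne ak_def[THEN meta_eq_to_obj_eq] ay_def[THEN meta_eq_to_obj_eq] rec st1 st2]
    have B: "case bisect g lo hi n of (a, b) \<Rightarrow> a \<le> r \<and> r \<le> b \<and> b - a \<le> eps"
      if "real n \<ge> log 2 (1 / eps) + log 2 (isgd_L eta N K c q (ut$i))" for n
      by (rule bisect_width[OF r mono w Lp epsp]) (use that in \<open>simp_all add: L_def\<close>)
    have iff: "\<forall>u' W'. is_isgd_iterate eta mu x y i k ut Wt u' W' \<longleftrightarrow>
             (u', W') = isgd_recon i k (y i) (x i) ut Wt ak ay (isgd_scal eta N K ak ay c q r)"
      using F rec sc by simp
    have main: "hi - lo \<le> isgd_L eta N K c q (ut$i) \<and>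
       (\<exists>r. lo \<le> r \<and> r \<le> hi \<and>
          (\<forall>u' W'. is_isgd_iterate eta mu x y i k ut Wt u' W' \<longleftrightarrow>
             (u', W') = isgd_recon i k (y i) (x i) ut Wt ak ay (isgd_scal eta N K ak ay c q r)) \<and>
          (\<forall>n::nat. real n \<ge> log 2 (1 / eps) + log 2 (isgd_L eta N K c q (ut$i)) \<longrightarrow>
             (case bisect g lo hi n of (a, b) \<Rightarrow> a \<le> r \<and> r \<le> b \<and> b - a \<le> eps)))"
      using w r iff B unfolding L_def by blast
    show ?thesis unfolding br using F main by simp
  qed
  show ?thesis
  proof (cases "q > 0")
    case True
    define Q where "Q = q * (ak + ay)"
    have Qp: "Q > 0" unfolding Q_def using True akp ayp by simp
    have Qle: "Q \<le> 2 * q" unfolding Q_def using True akp ayp by simp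
    define CC where "CC = Q * eta * N * (K - 1)"
    have CCp: "CC > 0" unfolding CC_def using Qp eta Np K2r by simp
    define ub where "ub = isgd_ub eta N K c Q"
    have ubf: "ub b = c - b - ln b + ln CC" if "b > 0" for b
      unfolding ub_def isgd_ub_def CC_def[symmetric] using that CCp by (simp add: ln_div)
    define h where "h = (\<lambda>u. u - ut$i + eta * N * (1 - exp (- u)))"
    define g where "g = (\<lambda>b. Q * h (ub b) - b)"
    have br: "isgd_bracket eta N K ak ay c q (ut$i) = (g, 0, L)"
      unfolding isgd_bracket_def using True by (simp add: Let_def g_def h_def ub_def Q_def L_def)
    have hmono: "h u1 < h u2" if "u1 < u2" for u1 u2
    proof -
      have "exp (- u2) < exp (- u1)" using that by simp
      hence "eta * N * exp (- u2) < eta * N * exp (- u1)" using eta Np by simp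
      thus ?thesis unfolding h_def using that by (simp add: algebra_simps)
    qed
    have dec: "g b < g a" if "a \<in> {0<..}" "b \<in> {0<..}" "a < b" for a b
    proof -
      have "ln a < ln b" using that by simp
      moreover have "ub a = c - a - ln a + ln CC" "ub b = c - b - ln b + ln CC"
        using ubf that by auto
      ultimately have "ub b < ub a" using that by linarith
      hence "h (ub b) < h (ub a)" by (rule hmono)
      hence "Q * h (ub b) < Q * h (ub a)" using Qp by simp
      thus ?thesis unfolding g_def using that by simp
    qed
    have gL: "g L \<le> 0"
    proof -
      have "Q * eta * N > 0" using Qp eta Np by simp
      have QL: "Q * eta * N \<le> L"
      proof -
        have "Q * (eta * N) \<le> 2 * q * (eta * N)" using Qle eta Np by (intro mult_right_mono) auto
        moreover have "2 * q * (eta * N) \<le> L" unfolding L_def isgd_L_def using lnK by simp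
        ultimately show ?thesis by (simp add: mult.assoc)
      qed
      have "ln CC = ln (Q * eta * N) + ln (K - 1)" unfolding CC_def
        using Qp eta Np K2r by (simp add: ln_mult)
      moreover have "ln (Q * eta * N) \<le> ln L" using QL \<open>Q * eta * N > 0\<close> by simp
      moreover have "ln (K - 1) \<le> ln (2 * K)" using K2r by simp
      moreover have "c - ut$i \<le> \<bar>c - ut$i\<bar>" by simp
      moreover have "L = \<bar>c - ut$i\<bar> + 2 * eta * N * q + ln (2 * K)" unfolding L_def isgd_L_def ..
      moreover have "2 * eta * N * q \<ge> 0" using eta Np q0 by simp
      ultimately have u0: "ub L - ut$i \<le> 0" using ubf[OF Lp] by linarith
      have "eta * N * exp (- ub L) > 0" using eta Np by simp
      hence "h (ub L) \<le> eta * N" unfolding h_def using u0 by (simp add: algebra_simps)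
      hence "Q * h (ub L) \<le> Q * (eta * N)" using Qp by simp
      thus ?thesis unfolding g_def using QL by (simp add: mult.assoc)
    qed
    define T where "T = c - ut$i + ln CC"
    define dl where "dl = exp (- (\<bar>T\<bar> + \<bar>ut$i\<bar> + 1 + 1/Q + \<bar>ln L\<bar>))"
    have dlp: "dl > 0" unfolding dl_def by simp
    have dl1: "dl \<le> 1"
    proof -
      have "1/Q > 0" using Qp by simp
      hence "- (\<bar>T\<bar> + \<bar>ut$i\<bar> + 1 + 1/Q + \<bar>ln L\<bar>) \<le> 0"
        using abs_ge_zero[of T] abs_ge_zero[of "ut$i"] abs_ge_zero[of "ln L"] by linarith
      thus ?thesis unfolding dl_def by simp
    qed
    have dlL: "dl \<le> L"
    proof -
      have "1/Q > 0" using Qp by simp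
      hence "- (\<bar>T\<bar> + \<bar>ut$i\<bar> + 1 + 1/Q + \<bar>ln L\<bar>) \<le> ln L"
        using abs_ge_zero[of T] abs_ge_zero[of "ut$i"] abs_ge_self[of "- ln L"] by linarith
      hence "dl \<le> exp (ln L)" unfolding dl_def by simp
      thus ?thesis using Lp by simp
    qed
    have gdl: "g dl \<ge> 0"
    proof -
      have lndl: "ln dl = - (\<bar>T\<bar> + \<bar>ut$i\<bar> + 1 + 1/Q + \<bar>ln L\<bar>)" unfolding dl_def by simp
      have e: "ub dl = T + ut$i - dl + \<bar>T\<bar> + \<bar>ut$i\<bar> + 1 + 1/Q + \<bar>ln L\<bar>"
        using ubf[OF dlp] lndl unfolding T_def by simp
      have Qi: "1/Q > 0" using Qp by simp
      have u1: "ub dl \<ge> 0" using e dl1 Qi by linarith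
      have u2: "ub dl - ut$i \<ge> 1/Q" using e dl1 by linarith
      have "exp (- ub dl) \<le> 1" using u1 by simp
      hence "eta * N * (1 - exp (- ub dl)) \<ge> 0" using eta Np by simp
      hence "h (ub dl) \<ge> 1/Q" unfolding h_def using u2 by linarith
      hence "Q * h (ub dl) \<ge> Q * (1/Q)" using Qp by (intro mult_left_mono) auto
      hence "Q * h (ub dl) \<ge> 1" using Qp by simp
      thus ?thesis unfolding g_def using dl1 by simp
    qed
    have cont: "continuous_on {dl..L} g"
      unfolding g_def h_def ub_def isgd_ub_def
      using dlp CCp unfolding CC_def[symmetric] by (intro continuous_intros) auto
    obtain r where r: "dl \<le> r" "r \<le> L" "g r = 0"
      using IVT2'[of g L 0 dl, OF gL gdl dlL cont] by blast
    have rp: "r > 0" using r dlp by simp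
    show ?thesis
    proof (rule assemble[OF br _ _ _ _ _ _ _])
      show "L - 0 \<le> L" by simp
      show "0 \<le> r" "r \<le> L" using rp r by auto
      show "(0 \<le> g m \<longrightarrow> m \<le> r) \<and> (g m < 0 \<longrightarrow> r \<le> m)" if "(0 + r) / 2 \<le> m" "m \<le> L" for m
      proof (rule decr_root[where D="{0<..}" and g=g])
        show "\<And>a b. a \<in> {0<..} \<Longrightarrow> b \<in> {0<..} \<Longrightarrow> a < b \<Longrightarrow> g b < g a" by (rule dec)
        show "r \<in> {0<..}" "g r = 0" "m \<in> {0<..}" using rp r that by auto
      qed
      show "isgd_scal eta N K ak ay c q r = (ub r, r / Q)"
        unfolding isgd_scal_def using True by (simp add: ub_def Q_def)
      have lnr: "c - r - ub r = ln (r / CC)" using ubf[OF rp] rp CCp by (simp add: ln_div)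
      have "r / Q * (q * (ak + ay)) = r" using Qp by (simp add: Q_def[symmetric])
      hence "exp (c - r / Q * (q * (ak + ay)) - ub r) = r / CC" using lnr rp CCp by simp
      thus "r / Q = eta * N * (K - 1) * exp (c - r / Q * (q * (ak + ay)) - ub r)"
        using Qp eta Np K2r by (simp add: CC_def field_simps)
      have "Q * h (ub r) = r" using r(3) unfolding g_def by simp
      hence "h (ub r) = r / Q" using Qp by (simp add: field_simps)
      thus "eta * N * (1 - exp (- ub r)) - r / Q + ub r - ut $ i = 0" unfolding h_def by simp
    qed
  next
    case False
    hence q00: "q = 0" using q0 by simp
    hence xi0: "x i = 0" unfolding q_def by simp
    have c0: "c = 0" unfolding c_def xi0 by simp
    define A where "A = 1 + (K - 1) * exp c"
    have AK: "A = K" unfolding A_def c0 by simp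
    have Ap: "A > 0" using AK K2r by simp
    define g where "g = (\<lambda>v. ut$i - v - eta * N * (1 - A * exp (- v)))"
    define lo where "lo = min (ut$i) (ln A)"
    define hi where "hi = max (ut$i) (ln A)"
    have br: "isgd_bracket eta N K ak ay c q (ut$i) = (g, lo, hi)"
      unfolding isgd_bracket_def using False by (simp add: Let_def g_def A_def lo_def hi_def)
    have dec: "g b < g a" if "a \<in> UNIV" "b \<in> UNIV" "a < b" for a b
    proof -
      have "exp (- b) < exp (- a)" using that by simp
      hence "eta * N * A * exp (- b) < eta * N * A * exp (- a)" using eta Np Ap by simp
      thus ?thesis unfolding g_def using that by (simp add: algebra_simps)
    qed
    have gA: "g (ln A) = ut$i - ln A" unfolding g_def using Ap by (simp add: exp_minus)
    have gu: "g (ut$i) = eta * N * (A * exp (- ut$i) - 1)" unfolding g_def by (simp add: algebra_simps)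
    have glo: "g lo \<ge> 0" and ghi: "g hi \<le> 0"
    proof -
      have "A * exp (- ut$i) = exp (ln A - ut$i)" using Ap by (simp add: exp_diff exp_minus field_simps)
      moreover have "eta * N > 0" using eta Np by simp
      ultimately have "(ut$i \<le> ln A \<longrightarrow> g (ut$i) \<ge> 0) \<and> (ut$i \<ge> ln A \<longrightarrow> g (ut$i) \<le> 0)"
        unfolding gu by (auto intro: mult_nonneg_nonneg mult_nonneg_nonpos)
      thus "g lo \<ge> 0" "g hi \<le> 0" unfolding lo_def hi_def min_def max_def using gA by auto
    qed
    have lohi: "lo \<le> hi" unfolding lo_def hi_def by simp
    have cont: "continuous_on {lo..hi} g" unfolding g_def by (intro continuous_intros)
    obtain r where r: "lo \<le> r" "r \<le> hi" "g r = 0"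
      using IVT2'[of g hi 0 lo, OF ghi glo lohi cont] by blast
    show ?thesis
    proof (rule assemble[OF br _ _ _ _ _ _ _])
      have "hi - lo = \<bar>ut$i - ln K\<bar>" unfolding hi_def lo_def AK by simp
      also have "\<dots> \<le> \<bar>ut$i\<bar> + ln K"
      proof -
        have "ln K \<ge> 0" using K2r by simp
        thus ?thesis by linarith
      qed
      also have "\<dots> \<le> L" unfolding L_def isgd_L_def c0 q00 using K2r by (simp add: ln_mult)
      finally show "hi - lo \<le> L" .
      show "lo \<le> r" "r \<le> hi" using r by auto
      show "(0 \<le> g m \<longrightarrow> m \<le> r) \<and> (g m < 0 \<longrightarrow> r \<le> m)" for m
        by (rule decr_root[where D=UNIV and g=g]) (use dec r in auto)
      show "isgd_scal eta N K ak ay c q r = (r, eta * N * (K - 1) * exp (c - r))"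
        unfolding isgd_scal_def using False by simp
      show "eta * N * (K - 1) * exp (c - r) = eta * N * (K - 1) * exp (c - eta * N * (K - 1) * exp (c - r) * (q * (ak + ay)) - r)"
        using q00 by simp
      show "eta * N * (1 - exp (- r)) - eta * N * (K - 1) * exp (c - r) + r - ut $ i = 0"
        using r(3) unfolding g_def AK c0 by (simp add: algebra_simps)
    qed
  qed
qed


end
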